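(* Let $p_1,\ldots,p_n,q_1,\ldots,q_n\in(0,1]$ and $c>0$ satisfy \[ \left(\frac{p_1+q_1}{2}\cdots\frac{p_n+q_n}{2}\right)^2\le c\,p_1\cdots p_n\,q_1\cdots q_n . \] Then $\sum_{i=1}^n(p_i-q_i)^2\le O(\log c)$, where the constant in $O(\cdot)$ is absolute.
   Context: Logarithms are binary. *)

theory Defs
  imports Complex_Main
begin

end

theory Submission
  imports Defs
begin

lemma factor_bound:
  fixes p q :: real
  assumes "0 < p" "p \<le> 1" "0 < q" "q \<le> 1"
  shows "3/16 * (p - q)^2 \<le> ln (((p + q) / 2)^2 / (p * q))"
proof -
  define x where "x = (p - q)^2 / 4"
  have d1: "(p - q)^2 \<le> 1"
  proof -
    have "\<bar>p - q\<bar> \<le> 1" using assms by arith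
    thus ?thesis by (simp add: abs_square_le_1)
  qed
  have x0: "0 \<le> x" and x1: "x \<le> 1/4" using d1 by (auto simp: x_def)
  have pq: "0 < p * q" "p * q \<le> 1" using assms by (auto simp: mult_le_one)
  have eq: "((p + q) / 2)^2 / (p * q) = 1 + (p - q)^2 / (4 * (p * q))"
  proof -
    have "1 + (p - q)^2 / (4 * (p * q)) = (4 * (p * q) + (p - q)^2) / (4 * (p * q))"
      using assms by (simp add: add_divide_distrib)
    also have "4 * (p * q) + (p - q)^2 = 4 * ((p + q) / 2)^2"
      by (simp add: power2_eq_square algebra_simps)
    finally show ?thesis using pq by simp
  qed
  have "(p - q)^2 / (4 * (p * q)) \<ge> (p - q)^2 / 4"
    using pq by (intro divide_left_mono) auto
  hence ge: "((p + q) / 2)^2 / (p * q) \<ge> 1 + x" unfolding eq x_def by simp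
  have "x - x^2 \<le> ln (1 + x)" using x0 x1 by (intro ln_one_plus_pos_lower_bound) auto
  also have "\<dots> \<le> ln (((p + q) / 2)^2 / (p * q))" using ge x0 by simp
  finally have "x - x^2 \<le> ln (((p + q) / 2)^2 / (p * q))" .
  moreover have "3/4 * x \<le> x - x^2"
  proof -
    have "x * (x * 4) \<le> x * 1" using x0 x1 by (intro mult_left_mono) auto
    thus ?thesis by (simp add: power2_eq_square algebra_simps)
  qed
  ultimately show ?thesis unfolding x_def by simp
qed

theorem lemma3:
  "\<exists>C::real. C > 0 \<and>
     (\<forall>(n::nat) (p::nat \<Rightarrow> real) (q::nat \<Rightarrow> real) (c::real).
        (\<forall>i<n. 0 < p i \<and> p i \<le> 1) \<longrightarrow>
        (\<forall>i<n. 0 < q i \<and> q i \<le> 1) \<longrightarrow>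
        c > 0 \<longrightarrow>
        (\<Prod>i<n. (p i + q i) / 2) ^ 2 \<le> c * (\<Prod>i<n. p i) * (\<Prod>i<n. q i) \<longrightarrow>
        (\<Sum>i<n. (p i - q i) ^ 2) \<le> C * log 2 c)"
proof (intro exI[of _ "16/3"] conjI allI impI)
  fix n :: nat and p q :: "nat \<Rightarrow> real" and c :: real
  assume hp: "\<forall>i<n. 0 < p i \<and> p i \<le> 1" and hq: "\<forall>i<n. 0 < q i \<and> q i \<le> 1"
    and hc: "c > 0"
    and h: "(\<Prod>i<n. (p i + q i) / 2) ^ 2 \<le> c * (\<Prod>i<n. p i) * (\<Prod>i<n. q i)"
  define r where "r i = ((p i + q i) / 2)^2 / (p i * q i)" for i
  have Pp: "(\<Prod>i<n. p i) > 0" using hp by (intro prod_pos) auto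
  have Pq: "(\<Prod>i<n. q i) > 0" using hq by (intro prod_pos) auto
  have rpos: "r i > 0" if "i < n" for i
  proof -
    have "p i + q i > 0" "p i * q i > 0" using hp hq that by (auto simp: add_pos_pos)
    thus ?thesis by (simp add: r_def)
  qed
  have "(\<Prod>i<n. r i) = (\<Prod>i<n. (p i + q i) / 2) ^ 2 / ((\<Prod>i<n. p i) * (\<Prod>i<n. q i))"
    unfolding r_def
    by (subst prod_dividef, subst prod_power_distrib, subst prod.distrib) (rule refl)
  also have "\<dots> \<le> c" using h Pp Pq by (simp add: divide_le_eq mult.assoc)
  finally have Pr: "(\<Prod>i<n. r i) \<le> c" .
  have Prpos: "(\<Prod>i<n. r i) > 0" using rpos by (intro prod_pos) auto
  have "(\<Sum>i<n. 3/16 * (p i - q i)^2) \<le> (\<Sum>i<n. ln (r i))"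
    using hp hq unfolding r_def by (intro sum_mono factor_bound) auto
  also have "\<dots> = ln (\<Prod>i<n. r i)" using rpos by (subst ln_prod) (auto, metis less_irrefl)
  also have "\<dots> \<le> ln c" using Pr Prpos by simp
  finally have S: "3/16 * (\<Sum>i<n. (p i - q i)^2) \<le> ln c" by (simp add: sum_distrib_left)
  have "0 \<le> (\<Sum>i<n. (p i - q i)^2)" by (intro sum_nonneg) auto
  hence lc: "0 \<le> ln c" using S by linarith
  have "ln c \<le> log 2 c" unfolding log_def using lc ln_2_less_1
    using mult_left_mono[of "ln 2" 1 "ln c"] by (simp add: le_divide_eq)
  thus "(\<Sum>i<n. (p i - q i) ^ 2) \<le> 16/3 * log 2 c" using S by linarith
qed simp

end
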